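(* For all integers $h \ge 2$ and $k \ge 3$, $hk \in \mathcal{R}_{\mathbf{Z}}(h,k)$.
   Context: For a positive integer $h$ and a finite set $A$ of integers, $hA$ denotes the set of all sums $a_1+\cdots+a_h$ with $a_1,\ldots,a_h \in A$ (not necessarily distinct). The sumset size set is $\mathcal{R}_{\mathbf{Z}}(h,k) = \{ |hA| : A \subseteq \mathbf{Z},\ |A| = k\}$. *)

theory Defs
  imports Main
begin

definition hsumset :: "nat \<Rightarrow> int set \<Rightarrow> int set" where
  "hsumset h A = {(\<Sum>i<h. a i) | a. \<forall>i<h. a i \<in> A}"

definition sumset_sizes :: "nat \<Rightarrow> nat \<Rightarrow> nat set" where
  "sumset_sizes h k = {card (hsumset h A) | A. finite A \<and> card A = k}"

end

theory Submission
  imports Defs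
begin

lemma hsumset_Suc:
  "hsumset (Suc h) A = {x + y | x y. x \<in> hsumset h A \<and> y \<in> A}"
proof
  show "hsumset (Suc h) A \<subseteq> {x + y | x y. x \<in> hsumset h A \<and> y \<in> A}"
  proof
    fix s assume "s \<in> hsumset (Suc h) A"
    then obtain a where s: "s = (\<Sum>i<Suc h. a i)" and a: "\<forall>i<Suc h. a i \<in> A"
      unfolding hsumset_def by blast
    have "(\<Sum>i<h. a i) \<in> hsumset h A" unfolding hsumset_def using a by auto
    moreover have "s = (\<Sum>i<h. a i) + a h" using s by simp
    ultimately show "s \<in> {x + y | x y. x \<in> hsumset h A \<and> y \<in> A}" using a by blast
  qed
next
  show "{x + y | x y. x \<in> hsumset h A \<and> y \<in> A} \<subseteq> hsumset (Suc h) A"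
  proof
    fix s assume "s \<in> {x + y | x y. x \<in> hsumset h A \<and> y \<in> A}"
    then obtain a y where s: "s = (\<Sum>i<h. a i) + y" and a: "\<forall>i<h. a i \<in> A" and y: "y \<in> A"
      unfolding hsumset_def by blast
    define b where "b = a(h := y)"
    have "(\<Sum>i<h. b i) = (\<Sum>i<h. a i)" unfolding b_def by (rule sum.cong) auto
    then have "s = (\<Sum>i<Suc h. b i)" using s by (simp add: b_def)
    moreover have "\<forall>i<Suc h. b i \<in> A" using a y by (auto simp: b_def less_Suc_eq)
    ultimately show "s \<in> hsumset (Suc h) A" unfolding hsumset_def by blast
  qed
qed

lemma hsumset_0: "hsumset 0 A = {0}"
  unfolding hsumset_def by auto

lemma main_char:
  fixes k :: nat
  assumes "k \<ge> 3"
  shows "hsumset h ({0..int k} - {int k - 1}) = {0..int h * int k} - {int h * int k - 1}"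
proof (induction h)
  case 0
  then show ?case by (simp add: hsumset_0)
next
  case (Suc h)
  let ?A = "{0..int k} - {int k - 1}"
  let ?K = "int k" and ?H = "int h"
  have eq: "int (Suc h) * ?K = ?H * ?K + ?K" by (simp add: algebra_simps)
  show ?case
  proof
    show "hsumset (Suc h) ?A \<subseteq> {0..int (Suc h) * ?K} - {int (Suc h) * ?K - 1}"
    proof
      fix s assume "s \<in> hsumset (Suc h) ?A"
      then obtain x y where s: "s = x + y" and x: "x \<in> hsumset h ?A" and y: "y \<in> ?A"
        unfolding hsumset_Suc by blast
      have x': "0 \<le> x" "x \<le> ?H * ?K" "x \<noteq> ?H * ?K - 1" using x Suc.IH by auto
      have y': "0 \<le> y" "y \<le> ?K" "y \<noteq> ?K - 1" using y by auto
      show "s \<in> {0..int (Suc h) * ?K} - {int (Suc h) * ?K - 1}"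
        unfolding eq using x' y' s by auto
    qed
  next
    show "{0..int (Suc h) * ?K} - {int (Suc h) * ?K - 1} \<subseteq> hsumset (Suc h) ?A"
    proof
      fix s assume "s \<in> {0..int (Suc h) * ?K} - {int (Suc h) * ?K - 1}"
      then have s: "0 \<le> s" "s \<le> ?H * ?K + ?K" "s \<noteq> ?H * ?K + ?K - 1" unfolding eq by auto
      have kk: "?K \<ge> 3" using assms by simp
      have hk: "?H * ?K \<ge> 0" by simp
      show "s \<in> hsumset (Suc h) ?A"
      proof (cases "s \<le> ?H * ?K")
        case True
        show ?thesis
        proof (cases "s = ?H * ?K - 1")
          case True
          then have "h \<ge> 1" using s(1) by (cases h) auto
          then have "?H \<ge> 1" by simp
          then have "?H * ?K \<ge> 1 * 3" using kk by (intro mult_mono) auto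
          then have "?H * ?K \<ge> 3" by simp
          then have "?H * ?K - 2 \<in> hsumset h ?A" using Suc.IH by auto
          moreover have "(1::int) \<in> ?A" using kk by auto
          moreover have "s = (?H * ?K - 2) + 1" using True by simp
          ultimately show ?thesis unfolding hsumset_Suc by blast
        next
          case False
          then have "s \<in> hsumset h ?A" using Suc.IH s(1) \<open>s \<le> ?H * ?K\<close> by auto
          moreover have "(0::int) \<in> ?A" using kk by auto
          ultimately show ?thesis unfolding hsumset_Suc by force
        qed
      next
        case False
        have "?H * ?K \<in> hsumset h ?A" using Suc.IH kk by auto
        moreover have "s - ?H * ?K \<in> ?A" using False s by auto
        moreover have "s = ?H * ?K + (s - ?H * ?K)" by simp
        ultimately show ?thesis unfolding hsumset_Suc by blast
      qed
    qed
  qed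
qed

theorem mainTheorem9:
  fixes h k :: nat
  assumes "h \<ge> 2" and "k \<ge> 3"
  shows "h * k \<in> sumset_sizes h k"
proof -
  let ?A = "{0..int k} - {int k - 1}"
  have ck: "card {0..int k} = k + 1" by simp
  have mk: "int k - 1 \<in> {0..int k}" using assms(2) by simp
  have cA: "card ?A = k" using card_Diff_singleton[OF mk] ck by simp
  have fA: "finite ?A" by simp
  define n where "n = h * k"
  have "n \<ge> 1" using assms by (simp add: n_def Suc_le_eq)
  have hk: "int h * int k = int n" by (simp add: n_def)
  have m: "int n - 1 \<in> {0..int n}" using \<open>n \<ge> 1\<close> by simp
  have c1: "card {0..int n} = n + 1" by simp
  have "card ({0..int n} - {int n - 1}) = n"
    using card_Diff_singleton[OF m] c1 by simp
  then have "card (hsumset h ?A) = n"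
    using main_char[OF assms(2), of h] unfolding hk by simp
  then have "finite ?A \<and> card ?A = k \<and> h * k = card (hsumset h ?A)" using cA fA n_def by simp
  then show ?thesis unfolding sumset_sizes_def by blast
qed

end
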